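(* For all $r,s\ge1$, as an identity of polynomials in $q$, $$\sum_C(q-1)^{|S(C)|-l(C)}(-1)^{|S(C)|}=q^{\min(r,s)},$$ where the sum runs over all cells $C$ for $(r,s)$, including the empty cell.
   Context: A cell (for given $r,s$) is a finite (possibly empty) sequence of distinct pairs $(i_1,j_1),\dots,(i_l,j_l)$ with $1\le i_k\le r$, $1\le j_k\le s$, $i_1\le\cdots\le i_l$ and $j_1\le\cdots\le j_l$; $l(C)=l$ and $|S(C)|=|\{i_1,\dots,i_l\}|+|\{j_1,\dots,j_l\}|$ (so the empty cell has $l=|S|=0$). *)

theory Defs
  imports "HOL-Computational_Algebra.Polynomial"
begin

definition is_cell :: "nat \<Rightarrow> nat \<Rightarrow> (nat \<times> nat) list \<Rightarrow> bool" where
  "is_cell r s C \<longleftrightarrow> distinct C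
     \<and> (\<forall>p\<in>set C. 1 \<le> fst p \<and> fst p \<le> r \<and> 1 \<le> snd p \<and> snd p \<le> s)
     \<and> sorted (map fst C) \<and> sorted (map snd C)"

definition cells :: "nat \<Rightarrow> nat \<Rightarrow> (nat \<times> nat) list set" where
  "cells r s = {C. is_cell r s C}"

definition cell_l :: "(nat \<times> nat) list \<Rightarrow> nat" where
  "cell_l C = length C"

definition cell_S :: "(nat \<times> nat) list \<Rightarrow> nat" where
  "cell_S C = card (fst ` set C) + card (snd ` set C)"

end

theory Submission
  imports Defs
begin

definition wt :: "(nat \<times> nat) list \<Rightarrow> int poly" where
  "wt C = [:-1, 1:] ^ (cell_S C - cell_l C) * (-1) ^ cell_S C"

lemma chain_cmp:
  assumes "sorted (map fst C)" "sorted (map snd C)" "p \<in> set C" "q \<in> set C"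
  shows "(fst p \<le> fst q \<and> snd p \<le> snd q) \<or> (fst q \<le> fst p \<and> snd q \<le> snd p)"
proof -
  obtain i where i: "i < length C" "C ! i = p" using assms(3) by (auto simp: in_set_conv_nth)
  obtain j where j: "j < length C" "C ! j = q" using assms(4) by (auto simp: in_set_conv_nth)
  show ?thesis
  proof (cases "i \<le> j")
    case True
    then show ?thesis using sorted_nth_mono[OF assms(1) True] sorted_nth_mono[OF assms(2) True] i j by auto
  next
    case False
    then have ji: "j \<le> i" by simp
    show ?thesis using sorted_nth_mono[OF assms(1) ji] sorted_nth_mono[OF assms(2) ji] i j by auto
  qed
qed

lemma new_elem:
  assumes "distinct (C @ [x])" "sorted (map fst (C @ [x]))" "sorted (map snd (C @ [x]))"
  shows "fst x \<notin> fst ` set C \<or> snd x \<notin> snd ` set C"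
proof (rule ccontr)
  assume "\<not> ?thesis"
  then obtain y z where y: "y \<in> set C" "fst y = fst x" and z: "z \<in> set C" "snd z = snd x" by force
  have xn: "x \<notin> set C" using assms(1) by simp
  have le: "\<forall>u\<in>set C. fst u \<le> fst x \<and> snd u \<le> snd x" using assms(2,3) by (simp add: sorted_append)
  have s1: "sorted (map fst C)" "sorted (map snd C)" using assms(2,3) by (simp_all add: sorted_append)
  from chain_cmp[OF s1 y(1) z(1)] show False
  proof
    assume "fst y \<le> fst z \<and> snd y \<le> snd z"
    moreover have "fst z \<le> fst x" "snd z \<le> snd x" using le z(1) by auto
    ultimately have "z = x" using z y by (simp add: prod_eq_iff)
    then show False using z xn by simp
  next
    assume "fst z \<le> fst y \<and> snd z \<le> snd y"
    moreover have "fst y \<le> fst x" "snd y \<le> snd x" using le y(1) by auto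
    ultimately have "y = x" using z y by (simp add: prod_eq_iff)
    then show False using y xn by simp
  qed
qed

lemma l_le_S:
  "distinct C \<Longrightarrow> sorted (map fst C) \<Longrightarrow> sorted (map snd C) \<Longrightarrow> cell_l C \<le> cell_S C"
proof (induction C rule: rev_induct)
  case Nil
  then show ?case by (simp add: cell_l_def cell_S_def)
next
  case (snoc x C)
  have IH: "cell_l C \<le> cell_S C" using snoc by (simp add: sorted_append)
  have "fst x \<notin> fst ` set C \<or> snd x \<notin> snd ` set C" using new_elem snoc.prems by blast
  then have "cell_S (C @ [x]) \<ge> cell_S C + 1"
    unfolding cell_S_def by (auto simp: card_insert_if)
  then show ?case using IH by (simp add: cell_l_def)
qed

lemma cells_fin: "finite (cells r s)"
proof (rule finite_subset)
  show "cells r s \<subseteq> {xs. set xs \<subseteq> {1..r} \<times> {1..s} \<and> distinct xs}"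
    by (auto simp: cells_def is_cell_def mem_Times_iff)
  show "finite {xs. set xs \<subseteq> {1..r} \<times> {1..s} \<and> distinct xs}"
    by (rule finite_subset_distinct) simp
qed

lemma cells0: "cells 0 s = {[]}" "cells r 0 = {[]}"
proof -
  have "\<And>C. is_cell 0 s C \<Longrightarrow> C = []" "\<And>C. is_cell r 0 C \<Longrightarrow> C = []"
    by (case_tac C; auto simp: is_cell_def)+
  then show "cells 0 s = {[]}" "cells r 0 = {[]}"
    by (auto simp: cells_def is_cell_def)
qed

lemma cells_int: "cells (r-1) s \<inter> cells r (s-1) = cells (r-1) (s-1)"
  by (auto simp: cells_def is_cell_def)

lemma not_row: assumes "is_cell r s C" "\<not> is_cell (r-1) s C" shows "\<exists>p\<in>set C. fst p = r"
proof (rule ccontr)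
  assume a: "\<not> ?thesis"
  have "\<forall>p\<in>set C. fst p \<le> r - 1"
  proof
    fix p assume p: "p \<in> set C"
    then have "fst p \<le> r" "fst p \<noteq> r" using a assms(1) unfolding is_cell_def by auto
    then show "fst p \<le> r - 1" by linarith
  qed
  then show False using assms unfolding is_cell_def by auto
qed
lemma not_col: assumes "is_cell r s C" "\<not> is_cell r (s-1) C" shows "\<exists>p\<in>set C. snd p = s"
proof (rule ccontr)
  assume a: "\<not> ?thesis"
  have "\<forall>p\<in>set C. snd p \<le> s - 1"
  proof
    fix p assume p: "p \<in> set C"
    then have "snd p \<le> s" "snd p \<noteq> s" using a assms(1) unfolding is_cell_def by auto
    then show "snd p \<le> s - 1" by linarith
  qed
  then show False using assms unfolding is_cell_def by auto
qed

lemma cells_split: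
  assumes "r \<ge> 1" "s \<ge> 1"
  shows "cells r s = (cells (r-1) s \<union> cells r (s-1)) \<union> (\<lambda>C. C @ [(r,s)]) ` (cells (r-1) s \<union> cells r (s-1))"
proof
  show "cells r s \<subseteq> (cells (r-1) s \<union> cells r (s-1)) \<union> (\<lambda>C. C @ [(r,s)]) ` (cells (r-1) s \<union> cells r (s-1))"
  proof
    fix C assume C: "C \<in> cells r s"
    show "C \<in> (cells (r-1) s \<union> cells r (s-1)) \<union> (\<lambda>C. C @ [(r,s)]) ` (cells (r-1) s \<union> cells r (s-1))"
    proof (cases "C \<in> cells (r-1) s \<union> cells r (s-1)")
      case True then show ?thesis by blast
    next
      case False
      with C obtain p p' where p: "p \<in> set C" "fst p = r" and p': "p' \<in> set C" "snd p' = s"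
        using not_row not_col unfolding cells_def by blast
      then have "C \<noteq> []" by auto
      then obtain C' x where Cx: "C = C' @ [x]" by (metis rev_exhaust)
      have ic: "is_cell r s C" using C by (simp add: cells_def)
      have le: "\<forall>u\<in>set C'. fst u \<le> fst x \<and> snd u \<le> snd x" using ic Cx
        by (simp add: is_cell_def sorted_append)
      have bx: "fst x \<le> r" "snd x \<le> s" using ic Cx by (auto simp: is_cell_def)
      have "fst x = r" using p le bx Cx by (metis Un_iff empty_iff empty_set le_antisym list.set(2) set_append singletonD)
      moreover have "snd x = s" using p' le bx Cx by (metis Un_iff empty_iff empty_set le_antisym list.set(2) set_append singletonD)
      ultimately have x: "x = (r,s)" by (metis prod.collapse)
      have ic': "is_cell r s C'" using ic Cx by (auto simp: is_cell_def sorted_append)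
      have xn: "(r,s) \<notin> set C'" using ic Cx x by (auto simp: is_cell_def)
      have "C' \<in> cells (r-1) s \<union> cells r (s-1)"
      proof (rule ccontr)
        assume "\<not> ?thesis"
        with ic' obtain y z where y: "y \<in> set C'" "fst y = r" and z: "z \<in> set C'" "snd z = s"
          using not_row not_col unfolding cells_def by blast
        have s1: "sorted (map fst C')" "sorted (map snd C')" using ic' by (auto simp: is_cell_def)
        have bd: "\<forall>u\<in>set C'. fst u \<le> r \<and> snd u \<le> s" using ic' by (auto simp: is_cell_def)
        from chain_cmp[OF s1 y(1) z(1)] bd y z xn show False
          by (metis le_antisym prod.collapse)
      qed
      then show ?thesis using Cx x by blast
    qed
  qed
next
  have sub: "cells (r-1) s \<union> cells r (s-1) \<subseteq> cells r s"
    by (auto simp: cells_def is_cell_def)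
  moreover have "(\<lambda>C. C @ [(r,s)]) ` (cells (r-1) s \<union> cells r (s-1)) \<subseteq> cells r s"
  proof
    fix D assume "D \<in> (\<lambda>C. C @ [(r,s)]) ` (cells (r-1) s \<union> cells r (s-1))"
    then obtain C where D: "D = C @ [(r,s)]" and C: "C \<in> cells (r-1) s \<union> cells r (s-1)" by blast
    have "(r,s) \<notin> set C" using C assms by (auto simp: cells_def is_cell_def)
    moreover have "is_cell r s C" using C sub by (auto simp: cells_def)
    ultimately show "D \<in> cells r s" using D assms
      by (auto simp: cells_def is_cell_def sorted_append)
  qed
  ultimately show "(cells (r-1) s \<union> cells r (s-1)) \<union> (\<lambda>C. C @ [(r,s)]) ` (cells (r-1) s \<union> cells r (s-1)) \<subseteq> cells r s"
    by blast
qed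

lemma wt_AB:
  assumes "r \<ge> 1" "s \<ge> 1" "C \<in> cells (r-1) (s-1)"
  shows "wt (C @ [(r,s)]) = [:-1,1:] * wt C"
proof -
  have ic: "is_cell (r-1) (s-1) C" using assms by (simp add: cells_def)
  have "r \<notin> fst ` set C" "s \<notin> snd ` set C" using ic assms by (auto simp: is_cell_def)
  then have S: "cell_S (C @ [(r,s)]) = cell_S C + 2" by (simp add: cell_S_def)
  have L: "cell_l (C @ [(r,s)]) = cell_l C + 1" by (simp add: cell_l_def)
  have "cell_l C \<le> cell_S C" using ic l_le_S by (auto simp: is_cell_def)
  then have e: "cell_S C + 2 - (cell_l C + 1) = Suc (cell_S C - cell_l C)" by simp
  have "wt (C @ [(r,s)]) = [:-1,1:] ^ Suc (cell_S C - cell_l C) * (-1) ^ (cell_S C + 2)"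
    unfolding wt_def S L e by simp
  also have "\<dots> = [:-1,1:] * wt C" unfolding wt_def by (simp only: power_Suc power_add mult.assoc) simp
  finally show ?thesis .
qed

lemma wt_A:
  assumes "r \<ge> 1" "s \<ge> 1" "C \<in> cells (r-1) s - cells r (s-1)"
  shows "wt (C @ [(r,s)]) = - wt C"
proof -
  have ic: "is_cell (r-1) s C" using assms by (simp add: cells_def)
  have "r \<notin> fst ` set C" using ic assms by (auto simp: is_cell_def)
  moreover have "s \<in> snd ` set C"
  proof (rule ccontr)
    assume "s \<notin> snd ` set C"
    then have "is_cell r (s-1) C" using ic by (force simp: is_cell_def)
    then show False using assms by (simp add: cells_def)
  qed
  ultimately have S: "cell_S (C @ [(r,s)]) = cell_S C + 1" by (simp add: cell_S_def insert_absorb)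
  have L: "cell_l (C @ [(r,s)]) = cell_l C + 1" by (simp add: cell_l_def)
  have "cell_l C \<le> cell_S C" using ic l_le_S by (auto simp: is_cell_def)
  then have "cell_S C + 1 - (cell_l C + 1) = cell_S C - cell_l C" by simp
  then show ?thesis unfolding wt_def S L by simp
qed

lemma wt_B:
  assumes "r \<ge> 1" "s \<ge> 1" "C \<in> cells r (s-1) - cells (r-1) s"
  shows "wt (C @ [(r,s)]) = - wt C"
proof -
  have ic: "is_cell r (s-1) C" using assms by (simp add: cells_def)
  have "s \<notin> snd ` set C" using ic assms by (auto simp: is_cell_def)
  moreover have "r \<in> fst ` set C"
  proof (rule ccontr)
    assume "r \<notin> fst ` set C"
    then have "is_cell (r-1) s C" using ic by (force simp: is_cell_def)
    then show False using assms by (simp add: cells_def)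
  qed
  ultimately have S: "cell_S (C @ [(r,s)]) = cell_S C + 1" by (simp add: cell_S_def insert_absorb)
  have L: "cell_l (C @ [(r,s)]) = cell_l C + 1" by (simp add: cell_l_def)
  have "cell_l C \<le> cell_S C" using ic l_le_S by (auto simp: is_cell_def)
  then have "cell_S C + 1 - (cell_l C + 1) = cell_S C - cell_l C" by simp
  then show ?thesis unfolding wt_def S L by simp
qed

lemma rec_step:
  assumes "r \<ge> 1" "s \<ge> 1"
  shows "sum wt (cells r s) = [:0,1:] * sum wt (cells (r-1) (s-1))"
proof -
  let ?A = "cells (r-1) s" and ?B = "cells r (s-1)" and ?I = "cells (r-1) (s-1)"
  let ?f = "\<lambda>C. C @ [(r,s)]"
  have fA: "finite ?A" and fB: "finite ?B" and fI: "finite ?I" by (simp_all add: cells_fin)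
  have disj: "(?A \<union> ?B) \<inter> ?f ` (?A \<union> ?B) = {}"
    using assms by (auto simp: cells_def is_cell_def)
  have inj: "inj_on ?f (?A \<union> ?B)" by (auto simp: inj_on_def)
  have "sum wt (cells r s) = sum wt (?A \<union> ?B) + sum wt (?f ` (?A \<union> ?B))"
    unfolding cells_split[OF assms] by (rule sum.union_disjoint) (use fA fB disj in auto)
  also have "sum wt (?f ` (?A \<union> ?B)) = sum (wt \<circ> ?f) (?A \<union> ?B)"
    by (rule sum.reindex[OF inj])
  finally have e1: "sum wt (cells r s) = sum wt (?A \<union> ?B) + sum (wt \<circ> ?f) (?A \<union> ?B)" .
  have u: "?A \<union> ?B = ?I \<union> (?A - ?B) \<union> (?B - ?A)" using cells_int[of r s] by blast
  have ga: "\<And>g :: (nat \<times> nat) list \<Rightarrow> int poly. sum g (?A \<union> ?B) = sum g ?I + sum g (?A - ?B) + sum g (?B - ?A)"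
  proof -
    fix g :: "(nat \<times> nat) list \<Rightarrow> int poly"
    have "sum g (?A \<union> ?B) = sum g (?I \<union> (?A - ?B)) + sum g (?B - ?A)"
      unfolding u by (rule sum.union_disjoint) (use fA fB fI cells_int[of r s] in auto)
    also have "sum g (?I \<union> (?A - ?B)) = sum g ?I + sum g (?A - ?B)"
      by (rule sum.union_disjoint) (use fA fB fI cells_int[of r s] in auto)
    finally show "sum g (?A \<union> ?B) = sum g ?I + sum g (?A - ?B) + sum g (?B - ?A)" .
  qed
  have s1: "sum (wt \<circ> ?f) ?I = [:-1,1:] * sum wt ?I"
    by (simp add: sum_distrib_left wt_AB[OF assms])
  have s2: "sum (wt \<circ> ?f) (?A - ?B) = - sum wt (?A - ?B)"
    by (simp add: wt_A[OF assms] sum_negf)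
  have s3: "sum (wt \<circ> ?f) (?B - ?A) = - sum wt (?B - ?A)"
    by (simp add: wt_B[OF assms] sum_negf)
  have "sum wt (cells r s) = (1 + [:-1,1:]) * sum wt ?I"
    unfolding e1 ga[of wt] ga[of "wt \<circ> ?f"] s1 s2 s3 by (simp add: algebra_simps)
  also have "1 + [:-1,1:] = ([:0,1:] :: int poly)" by (simp add: one_pCons)
  finally show ?thesis .
qed

lemma main_gen: "sum wt (cells r s) = ([:0,1:] :: int poly) ^ min r s"
proof (induction r arbitrary: s)
  case 0
  then show ?case by (simp add: cells0 wt_def cell_S_def cell_l_def)
next
  case (Suc r)
  show ?case
  proof (cases s)
    case 0
    then show ?thesis by (simp add: cells0 wt_def cell_S_def cell_l_def)
  next
    case (Suc s')
    then show ?thesis using rec_step[of "Suc r" s] Suc.IH[of s'] by simp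
  qed
qed

theorem mainTheorem14:
  fixes r s :: nat
  assumes "r \<ge> 1" and "s \<ge> 1"
  shows "(\<Sum>C\<in>cells r s. [:-1, 1:] ^ (cell_S C - cell_l C) * (-1) ^ cell_S C)
           = ([:0, 1:] :: int poly) ^ min r s"
  using main_gen[of r s] by (simp add: wt_def)

end
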